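(* Let $d\ge 1$, let $\Omega=\operatorname{diag}(\omega_j)_{j=1}^d\in\mathbb{R}^{d\times d}$ with all $\omega_j\ge 0$, let $\omega=\min_{j:\,\omega_j>0}\omega_j$ be the smallest nonzero frequency, and let $A\in\mathbb{C}^{d\times d}$ be self-adjoint. Let $0<h\le 1$ and let $\psi_1,\phi\colon\mathbb{R}\to\mathbb{R}$ be even functions such that for constants $c_0,c_1\ge0$ \[ |\psi_1(\xi)|\le c_0,\qquad |\phi(\xi)|\le c_0,\qquad |\phi(\xi)-1|\le c_1|\xi|\qquad\text{for all }\xi\in\mathbb{R}. \] Set $\Psi_1=\psi_1(h\Omega)$, $\Phi=\phi(h\Omega)$, and define for $q,\dot q\in\mathbb{C}^d$ \[ \mathcal{H}(q,\dot{q}) = \tfrac12 \|\Omega q\|^2 + \tfrac12 \|\dot{q}\|^2 + \tfrac12 \operatorname{Re}\big((\cos(h\Omega) \Phi q)^* A \Phi q\big) - \tfrac18 h^2 \|\Psi_1 A \Phi q\|^2, \] \[ H(q,\dot q)=\tfrac12 \|\Omega q\|^2 + \tfrac12 \|\dot{q}\|^2 + \tfrac12 q^*Aq . \] Then for all $q,\dot q\in\mathbb{C}^d$, \begin{align*} \big|\mathcal{H}(q,\dot{q}) - \tfrac12 \|\Omega q\|^2 - \tfrac12 \|\dot{q}\|^2\big| &\le \big(\breve{C}+\widehat{C} h^2\big) \|q\|^2, \\ \big|\mathcal{H}(q,\dot{q}) - H(q,\dot{q})\big| &\le \widetilde{C} \min\big(h,\omega^{-1}\big) \|q\| \, \|\Omega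 q\| + \widehat{C} h^2 \|q\|^2 \end{align*} with $\breve{C} = \tfrac12 c_0^2 \|A\|$, $\widehat{C} = \tfrac18 c_0^4 \|A\|^2$ and $\widetilde{C} = \tfrac12 \big(2 c_0^2 + (c_0+1)\max(c_0+1,c_1)\big) \|A\|$.
   Context: $\|\cdot\|$ is the Euclidean norm on $\mathbb{C}^d$ and, for matrices, the induced operator norm; ${}^*$ denotes conjugate transpose. For a function $f\colon\mathbb{R}\to\mathbb{R}$, $f(h\Omega)$ denotes the diagonal matrix $\operatorname{diag}(f(h\omega_j))_{j=1}^d$. *)

theory Defs
  imports "HOL-Analysis.Analysis"
begin

text \<open>Dimension d = CARD('n). Vectors in C^d are complex^'n, matrices complex^'n^'n.
  The Euclidean norm on complex^'n is the library norm (L2 of component moduli).\<close>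

definition cinner :: "complex^'n::finite \<Rightarrow> complex^'n \<Rightarrow> complex" where
  "cinner x y = (\<Sum>i\<in>UNIV. cnj (x$i) * y$i)"

definition diagm :: "('n::finite \<Rightarrow> real) \<Rightarrow> complex^'n^'n" where
  "diagm f = (\<chi> i j. if i = j then complex_of_real (f i) else 0)"

definition fdiag :: "(real \<Rightarrow> real) \<Rightarrow> real \<Rightarrow> ('n::finite \<Rightarrow> real) \<Rightarrow> complex^'n^'n" where
  "fdiag f h om = diagm (\<lambda>j. f (h * om j))"

definition self_adjoint :: "complex^'n::finite^'n \<Rightarrow> bool" where
  "self_adjoint A \<longleftrightarrow> (\<forall>i j. A$i$j = cnj (A$j$i))"

definition opnorm :: "complex^'n::finite^'n \<Rightarrow> real" where
  "opnorm A = onorm (\<lambda>x. A *v x)"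

definition min_freq :: "('n::finite \<Rightarrow> real) \<Rightarrow> real" where
  "min_freq om = Min {om j | j. om j > 0}"

definition mod_energy ::
  "real \<Rightarrow> ('n::finite \<Rightarrow> real) \<Rightarrow> complex^'n^'n \<Rightarrow> (real \<Rightarrow> real) \<Rightarrow> (real \<Rightarrow> real)
   \<Rightarrow> complex^'n \<Rightarrow> complex^'n \<Rightarrow> real" where
  "mod_energy h om A psi1 phi q qd =
     (1/2) * (norm (diagm om *v q))\<^sup>2 + (1/2) * (norm qd)\<^sup>2
     + (1/2) * Re (cinner (fdiag cos h om *v (fdiag phi h om *v q)) (A *v (fdiag phi h om *v q)))
     - (1/8) * h\<^sup>2 * (norm (fdiag psi1 h om *v (A *v (fdiag phi h om *v q))))\<^sup>2"

definition energy :: "('n::finite \<Rightarrow> real) \<Rightarrow> complex^'n^'n \<Rightarrow> complex^'n \<Rightarrow> complex^'n \<Rightarrow> real" where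
  "energy om A q qd =
     (1/2) * (norm (diagm om *v q))\<^sup>2 + (1/2) * (norm qd)\<^sup>2 + (1/2) * Re (cinner q (A *v q))"

end

theory Submission
  imports Defs
begin

lemma re_cinner: "Re (cinner x y) = x \<bullet> y"
  unfolding cinner_def inner_vec_def inner_complex_def by (simp add: Re_sum)

lemma diagm_mult: "diagm f *v q = (\<chi> i. complex_of_real (f i) * q$i)"
  unfolding diagm_def matrix_vector_mult_def
  by (simp add: vec_eq_iff if_distrib[where f="\<lambda>x. x * _"] cong: if_cong)

lemma fdiag_mult: "fdiag f h om *v q = (\<chi> i. complex_of_real (f (h * om i)) * q$i)"
  unfolding fdiag_def by (simp add: diagm_mult)

lemma bl_mat: "bounded_linear (\<lambda>x::complex^'n::finite. A *v x)"
proof -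
  have "linear (\<lambda>x::complex^'n::finite. A *v x)"
    by (rule linearI) (auto simp: matrix_vector_mult_def vec_eq_iff sum.distrib algebra_simps
         scaleR_sum_right)
  then show ?thesis by (simp add: linear_conv_bounded_linear)
qed

lemma opn: "norm (A *v x) \<le> opnorm A * norm x"
  unfolding opnorm_def by (rule onorm[OF bl_mat])

lemma opn_pos: "0 \<le> opnorm A"
  unfolding opnorm_def by (rule onorm_pos_le[OF bl_mat])

lemma comp_le0: assumes "\<And>i. norm (x$i) \<le> k * norm (y$i)" "0 \<le> k"
  shows "norm (x::complex^'n::finite) \<le> k * norm (y::complex^'n)"
proof -
  have "norm x \<le> norm (k *\<^sub>R y)"
    by (rule norm_le_componentwise_cart) (use assms in auto)
  then show ?thesis using assms(2) by simp
qed

lemma comp_le: assumes "\<And>i. norm (x$i) \<le> k * norm (y$i)"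
  shows "norm (x::complex^'n::finite) \<le> k * norm (y::complex^'n)"
proof (cases "0 \<le> k")
  case True then show ?thesis using comp_le0 assms by blast
next
  case False
  have "\<And>i. y$i = 0"
  proof -
    fix i have "0 \<le> k * norm (y$i)" using assms[of i] norm_ge_zero[of "x$i"] by linarith
    then have "norm (y$i) \<le> 0" using False by (simp add: zero_le_mult_iff)
    then show "y$i = 0" by simp
  qed
  then have y: "y = 0" by (simp add: vec_eq_iff)
  have "\<And>i. x$i = 0" using assms y by simp
  then have "x = 0" by (simp add: vec_eq_iff)
  then show ?thesis using y by simp
qed

lemma absaux: "\<bar>x\<bar> \<le> P \<Longrightarrow> 0 \<le> y \<Longrightarrow> y \<le> Q \<Longrightarrow> \<bar>(1/2)*x - y\<bar> \<le> (1/2)*P + (Q::real)"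
  by (simp add: abs_le_iff)

lemma cos_bd: "\<bar>cos a - 1\<bar> \<le> \<bar>a::real\<bar>"
proof -
  have "cos a = 1 - 2 * sin (a/2) ^ 2" using cos_double_sin[of "a/2"] by simp
  moreover have "\<bar>sin (a/2)\<bar> \<le> \<bar>a/2\<bar>" by (rule abs_sin_x_le_abs_x)
  moreover have "\<bar>sin (a/2)\<bar> \<le> 1" by simp
  ultimately have "sin (a/2)^2 \<le> \<bar>a/2\<bar>"
    by (metis abs_ge_zero abs_sin_x_le_abs_x dual_order.trans mult_left_le_one_le power2_abs power2_eq_square)
  with \<open>cos a = _\<close> show ?thesis by auto
qed

lemma t_cases:
  fixes om :: "'n::finite \<Rightarrow> real"
  assumes "\<forall>j. om j \<ge> 0" "0 < h"
  shows "om j = 0 \<or> (min h (inverse (min_freq om)) * om j = h * om j \<and> 0 \<le> h * om j)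
     \<or> 1 \<le> min h (inverse (min_freq om)) * om j"
proof (cases "om j = 0")
  case False
  then have oj: "om j > 0" using assms(1) by (metis less_eq_real_def)
  let ?S = "{om j | j. om j > 0}"
  have fin: "finite ?S" by simp
  have ne: "om j \<in> ?S" using oj by blast
  have le: "min_freq om \<le> om j" unfolding min_freq_def using Min_le[OF fin ne] .
  have "min_freq om \<in> ?S" unfolding min_freq_def using Min_in[OF fin] ne by blast
  then have pos: "min_freq om > 0" by auto
  show ?thesis
  proof (cases "h \<le> inverse (min_freq om)")
    case True then show ?thesis using oj assms by auto
  next
    case False
    then have "min h (inverse (min_freq om)) * om j = om j / min_freq om"
      by (simp add: field_simps)
    also have "\<dots> \<ge> 1" using le pos by simp
    finally show ?thesis by simp
  qed
qed simp

lemma comp_bounds: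
  fixes om :: "'n::finite \<Rightarrow> real"
  assumes "\<forall>j. om j \<ge> 0" "0 < h" "c0 \<ge> 0" "c1 \<ge> 0"
    and "\<forall>\<xi>. \<bar>phi \<xi>\<bar> \<le> c0"
    and "\<forall>\<xi>. \<bar>phi \<xi> - 1\<bar> \<le> c1 * \<bar>\<xi>\<bar>"
  defines "m \<equiv> min h (inverse (min_freq om))" and "M \<equiv> max (c0 + 1) c1"
  shows "\<bar>phi (h * om j) - 1\<bar> \<le> M * (m * om j)"
    and "\<bar>cos (h * om j) * phi (h * om j) - 1\<bar> \<le> (2 * c0 + M) * (m * om j)"
proof -
  let ?a = "h * om j"
  have a0: "?a \<ge> 0" using assms(1,2) by simp
  have p1: "\<bar>phi ?a - 1\<bar> \<le> c1 * ?a" using assms(6) a0 by (metis abs_of_nonneg)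
  have p2: "\<bar>phi ?a - 1\<bar> \<le> c0 + 1" using assms(5)[rule_format, of ?a] by linarith
  have q1: "\<bar>cos ?a - 1\<bar> \<le> ?a" using cos_bd[of ?a] a0 by simp
  have q2: "\<bar>cos ?a - 1\<bar> \<le> 2" using cos_le_one[of ?a] cos_ge_minus_one[of ?a] by linarith
  have phi0: "phi 0 = 1" using assms(6)[rule_format, of 0] by simp
  have M1: "c0 + 1 \<le> M" "c1 \<le> M" unfolding M_def by auto
  have A: "\<bar>phi ?a - 1\<bar> \<le> M * (m * om j) \<and> \<bar>cos ?a - 1\<bar> \<le> 2 * (m * om j)"
    using t_cases[OF assms(1,2), of j] unfolding m_def[symmetric]
  proof (elim disjE conjE)
    assume "om j = 0" then show ?thesis using phi0 by simp
  next
    assume e: "m * om j = h * om j" and "0 \<le> h * om j"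
    have "c1 * ?a \<le> M * ?a" using M1 a0 by (simp add: mult_right_mono)
    then show ?thesis using e p1 q1 a0 by auto
  next
    assume t1: "1 \<le> m * om j"
    have "c0 + 1 \<le> M * (m * om j)" using M1 t1 assms(3)
      by (metis dual_order.trans mult_le_cancel_left1 less_eq_real_def not_le zero_le_one add_nonneg_nonneg)
    then show ?thesis using p2 q2 t1 by linarith
  qed
  then show "\<bar>phi ?a - 1\<bar> \<le> M * (m * om j)" by simp
  have t0: "0 \<le> m * om j" using A abs_ge_zero[of "cos ?a - 1"] by linarith
  have "cos ?a * phi ?a - 1 = (cos ?a - 1) * phi ?a + (phi ?a - 1)" by (simp add: algebra_simps)
  then have "\<bar>cos ?a * phi ?a - 1\<bar> \<le> \<bar>cos ?a - 1\<bar> * \<bar>phi ?a\<bar> + \<bar>phi ?a - 1\<bar>"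
    by (metis abs_mult abs_triangle_ineq)
  also have "\<dots> \<le> (2 * (m * om j)) * c0 + M * (m * om j)"
    using A assms(5) t0 by (intro add_mono mult_mono) (auto intro: order_trans)
  finally show "\<bar>cos ?a * phi ?a - 1\<bar> \<le> (2 * c0 + M) * (m * om j)"
    by (simp add: algebra_simps)
qed

theorem lemma2:
  fixes om :: "'n::finite \<Rightarrow> real" and A :: "complex^'n^'n"
    and h c0 c1 :: real and psi1 phi :: "real \<Rightarrow> real"
  assumes "\<forall>j. om j \<ge> 0"
    and "self_adjoint A"
    and "0 < h" and "h \<le> 1"
    and "\<forall>x. psi1 (- x) = psi1 x" and "\<forall>x. phi (- x) = phi x"
    and "c0 \<ge> 0" and "c1 \<ge> 0"
    and "\<forall>\<xi>. \<bar>psi1 \<xi>\<bar> \<le> c0" and "\<forall>\<xi>. \<bar>phi \<xi>\<bar> \<le> c0"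
    and "\<forall>\<xi>. \<bar>phi \<xi> - 1\<bar> \<le> c1 * \<bar>\<xi>\<bar>"
  shows "\<forall>q qd :: complex^'n.
     \<bar>mod_energy h om A psi1 phi q qd - (1/2) * (norm (diagm om *v q))\<^sup>2 - (1/2) * (norm qd)\<^sup>2\<bar>
       \<le> ((1/2) * c0\<^sup>2 * opnorm A + (1/8) * c0^4 * (opnorm A)\<^sup>2 * h\<^sup>2) * (norm q)\<^sup>2
   \<and> \<bar>mod_energy h om A psi1 phi q qd - energy om A q qd\<bar>
       \<le> (1/2) * (2 * c0\<^sup>2 + (c0 + 1) * max (c0 + 1) c1) * opnorm A
            * min h (inverse (min_freq om)) * norm q * norm (diagm om *v q)
         + (1/8) * c0^4 * (opnorm A)\<^sup>2 * h\<^sup>2 * (norm q)\<^sup>2"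
proof (intro allI)
  fix q qd :: "complex^'n"
  define p where "p = fdiag phi h om *v q"
  define cp where "cp = fdiag cos h om *v p"
  define Ap where "Ap = A *v p"
  define X where "X = fdiag psi1 h om *v Ap"
  define nA where "nA = opnorm A"
  define m where "m = min h (inverse (min_freq om))"
  define M where "M = max (c0 + 1) c1"
  define W where "W = norm (diagm om *v q)"
  have nA0: "0 \<le> nA" unfolding nA_def by (rule opn_pos)
  have W0: "0 \<le> W" unfolding W_def by simp
  have me: "mod_energy h om A psi1 phi q qd = (1/2) * W^2 + (1/2) * (norm qd)^2
     + (1/2) * (cp \<bullet> Ap) - (1/8) * h^2 * (norm X)^2"
    unfolding mod_energy_def re_cinner W_def cp_def Ap_def X_def p_def by simp
  have en: "energy om A q qd = (1/2) * W^2 + (1/2) * (norm qd)^2 + (1/2) * (q \<bullet> (A *v q))"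
    unfolding energy_def re_cinner W_def by simp
  have np: "norm p \<le> c0 * norm q" unfolding p_def
    by (rule comp_le) (use assms(10) in \<open>auto simp: fdiag_mult norm_mult intro: mult_right_mono\<close>)
  have ncp: "norm cp \<le> 1 * norm p" unfolding cp_def
    by (rule comp_le) (auto simp: fdiag_mult norm_mult abs_le_iff intro!: mult_left_le_one_le)
  have nAp: "norm Ap \<le> nA * (c0 * norm q)"
    using opn[of A p] np nA0 unfolding Ap_def nA_def[symmetric]
    by (meson mult_left_mono order_trans)
  have nX: "norm X \<le> c0 * norm Ap" unfolding X_def
    by (rule comp_le) (use assms(9) in \<open>auto simp: fdiag_mult norm_mult intro: mult_right_mono\<close>)
  have nX2: "norm X \<le> c0 * (nA * (c0 * norm q))"
    using nX nAp assms(7) by (meson mult_left_mono order_trans)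
  have X2: "(norm X)^2 \<le> c0^4 * nA^2 * (norm q)^2"
  proof -
    have "(norm X)^2 \<le> (c0 * (nA * (c0 * norm q)))^2" by (rule power_mono[OF nX2]) simp
    also have "\<dots> = c0^4 * nA^2 * (norm q)^2" by (simp add: power_mult_distrib power2_eq_square power4_eq_xxxx)
    finally show ?thesis .
  qed
  have hX: "0 \<le> (1/8) * h^2 * (norm X)^2" by simp
  have hX2: "(1/8) * h^2 * (norm X)^2 \<le> (1/8) * c0^4 * nA^2 * h^2 * (norm q)^2"
    using mult_left_mono[OF X2, of "(1/8) * h^2"] by (simp add: algebra_simps)
  have I1: "\<bar>cp \<bullet> Ap\<bar> \<le> c0^2 * nA * (norm q)^2"
  proof -
    have "\<bar>cp \<bullet> Ap\<bar> \<le> norm cp * norm Ap" by (rule Cauchy_Schwarz_ineq2)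
    also have "\<dots> \<le> (c0 * norm q) * (nA * (c0 * norm q))"
      using ncp np nAp assms(7) by (intro mult_mono) auto
    also have "\<dots> = c0^2 * nA * (norm q)^2" by (simp add: power2_eq_square)
    finally show ?thesis .
  qed
  have part1: "\<bar>mod_energy h om A psi1 phi q qd - (1/2) * (norm (diagm om *v q))\<^sup>2 - (1/2) * (norm qd)\<^sup>2\<bar>
       \<le> ((1/2) * c0\<^sup>2 * opnorm A + (1/8) * c0^4 * (opnorm A)\<^sup>2 * h\<^sup>2) * (norm q)\<^sup>2"
  proof -
    have eq1: "mod_energy h om A psi1 phi q qd - (1/2) * (norm (diagm om *v q))\<^sup>2 - (1/2) * (norm qd)\<^sup>2
       = (1/2) * (cp \<bullet> Ap) - (1/8) * h^2 * (norm X)^2" unfolding me W_def by simp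
    have eq2: "((1/2) * c0\<^sup>2 * opnorm A + (1/8) * c0^4 * (opnorm A)\<^sup>2 * h\<^sup>2) * (norm q)\<^sup>2
       = (1/2) * (c0^2 * nA * (norm q)^2) + (1/8) * c0^4 * nA^2 * h^2 * (norm q)^2"
      unfolding nA_def by (simp add: algebra_simps)
    show ?thesis unfolding eq1 eq2 by (rule absaux[OF I1 hX hX2])
  qed
  have cb1: "\<And>j. \<bar>phi (h * om j) - 1\<bar> \<le> M * (m * om j)"
    using comp_bounds(1)[OF assms(1,3,7,8,10,11)] unfolding m_def M_def by blast
  have cb2: "\<And>j. \<bar>cos (h * om j) * phi (h * om j) - 1\<bar> \<le> (2 * c0 + M) * (m * om j)"
    using comp_bounds(2)[OF assms(1,3,7,8,10,11)] unfolding m_def M_def by blast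
  have D1: "norm (cp - q) \<le> ((2 * c0 + M) * m) * W" unfolding W_def
  proof (rule comp_le)
    fix i
    have "(cp - q)$i = complex_of_real (cos (h * om i) * phi (h * om i) - 1) * q$i"
      unfolding cp_def p_def by (simp add: fdiag_mult algebra_simps)
    then have "norm ((cp - q)$i) = \<bar>cos (h * om i) * phi (h * om i) - 1\<bar> * norm (q$i)"
      by (simp only: norm_mult norm_of_real)
    also have "\<dots> \<le> (2 * c0 + M) * (m * om i) * norm (q$i)"
      using cb2[of i] by (simp add: mult_right_mono)
    also have "\<dots> = ((2 * c0 + M) * m) * norm ((diagm om *v q)$i)"
      using assms(1) by (simp add: diagm_mult norm_mult)
    finally show "norm ((cp - q)$i) \<le> ((2 * c0 + M) * m) * norm ((diagm om *v q)$i)" .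
  qed
  have D2: "norm (p - q) \<le> (M * m) * W" unfolding W_def
  proof (rule comp_le)
    fix i
    have "(p - q)$i = complex_of_real (phi (h * om i) - 1) * q$i"
      unfolding p_def by (simp add: fdiag_mult algebra_simps)
    then have "norm ((p - q)$i) = \<bar>phi (h * om i) - 1\<bar> * norm (q$i)"
      by (simp only: norm_mult norm_of_real)
    also have "\<dots> \<le> M * (m * om i) * norm (q$i)"
      using cb1[of i] by (simp add: mult_right_mono)
    also have "\<dots> = (M * m) * norm ((diagm om *v q)$i)"
      using assms(1) by (simp add: diagm_mult norm_mult)
    finally show "norm ((p - q)$i) \<le> (M * m) * norm ((diagm om *v q)$i)" .
  qed
  have ident: "cp \<bullet> Ap - q \<bullet> (A *v q) = (cp - q) \<bullet> Ap + q \<bullet> (A *v (p - q))"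
    unfolding Ap_def by (simp add: inner_diff_left inner_diff_right matrix_vector_mult_diff_distrib)
  have E: "\<bar>cp \<bullet> Ap - q \<bullet> (A *v q)\<bar> \<le> (2 * c0\<^sup>2 + (c0 + 1) * M) * nA * m * norm q * W"
  proof -
    have "\<bar>cp \<bullet> Ap - q \<bullet> (A *v q)\<bar> \<le> \<bar>(cp - q) \<bullet> Ap\<bar> + \<bar>q \<bullet> (A *v (p - q))\<bar>"
      unfolding ident by (rule abs_triangle_ineq)
    also have "\<dots> \<le> norm (cp - q) * norm Ap + norm q * norm (A *v (p - q))"
      by (intro add_mono Cauchy_Schwarz_ineq2)
    also have "\<dots> \<le> (((2 * c0 + M) * m) * W) * (nA * (c0 * norm q)) + norm q * (nA * ((M * m) * W))"
    proof (intro add_mono mult_mono)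
      show "((2 * c0 + M) * m) * W \<ge> 0" using D1 norm_ge_zero[of "cp - q"] by linarith
      have "norm (A *v (p - q)) \<le> nA * norm (p - q)" unfolding nA_def by (rule opn)
      also have "\<dots> \<le> nA * ((M * m) * W)" using D2 nA0 by (rule mult_left_mono)
      finally show "norm (A *v (p - q)) \<le> nA * ((M * m) * W)" .
    qed (use D1 nAp in auto)
    also have "\<dots> = (2 * c0\<^sup>2 + (c0 + 1) * M) * nA * m * norm q * W"
      by (simp add: algebra_simps power2_eq_square)
    finally show ?thesis .
  qed
  have part2: "\<bar>mod_energy h om A psi1 phi q qd - energy om A q qd\<bar>
       \<le> (1/2) * (2 * c0\<^sup>2 + (c0 + 1) * max (c0 + 1) c1) * opnorm A
            * min h (inverse (min_freq om)) * norm q * norm (diagm om *v q)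
         + (1/8) * c0^4 * (opnorm A)\<^sup>2 * h\<^sup>2 * (norm q)\<^sup>2"
  proof -
    have eq1: "mod_energy h om A psi1 phi q qd - energy om A q qd
        = (1/2) * (cp \<bullet> Ap - q \<bullet> (A *v q)) - (1/8) * h^2 * (norm X)^2"
      unfolding me en by (simp add: algebra_simps)
    have eq2: "(1/2) * (2 * c0\<^sup>2 + (c0 + 1) * max (c0 + 1) c1) * opnorm A
            * min h (inverse (min_freq om)) * norm q * norm (diagm om *v q)
         + (1/8) * c0^4 * (opnorm A)\<^sup>2 * h\<^sup>2 * (norm q)\<^sup>2 =
        (1/2) * ((2 * c0\<^sup>2 + (c0 + 1) * M) * nA * m * norm q * W) + (1/8) * c0^4 * nA^2 * h^2 * (norm q)^2"
      unfolding W_def nA_def m_def M_def by (simp add: algebra_simps)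
    show ?thesis unfolding eq1 eq2 by (rule absaux[OF E hX hX2])
  qed
  show "\<bar>mod_energy h om A psi1 phi q qd - (1/2) * (norm (diagm om *v q))\<^sup>2 - (1/2) * (norm qd)\<^sup>2\<bar>
       \<le> ((1/2) * c0\<^sup>2 * opnorm A + (1/8) * c0^4 * (opnorm A)\<^sup>2 * h\<^sup>2) * (norm q)\<^sup>2
   \<and> \<bar>mod_energy h om A psi1 phi q qd - energy om A q qd\<bar>
       \<le> (1/2) * (2 * c0\<^sup>2 + (c0 + 1) * max (c0 + 1) c1) * opnorm A
            * min h (inverse (min_freq om)) * norm q * norm (diagm om *v q)
         + (1/8) * c0^4 * (opnorm A)\<^sup>2 * h\<^sup>2 * (norm q)\<^sup>2"
    using part1 part2 by blast
qed

end
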